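(* Let $k\ge 2$ and let $a$ be a nonnegative integer with $a\le k-2$ and $a+k-1$ odd. Let $P(x_1,\dots,x_k)=\operatorname{sign}(a x_1+x_2+\cdots+x_k)$ and $\tau=\lfloor (k-a-1)/2\rfloor$. Then: (1) $\hat P_{\{1\}}=1-\frac{1}{2^{k-2}}\sum_{l=0}^{\tau}\binom{k-1}{l}$; (2) for every odd $t$ with $1\le t\le k-1$ and every set $I\subseteq\{2,\dots,k\}$ with $|I|=t$, \[\hat P_I=\frac{1}{2^{k-2}}\sum_{i=0}^{\tau}\sum_{j=0}^{\tau-i}(-1)^j\binom{k-t-1}{i}\binom{t}{j};\] (3) for every even $t$ with $2\le t\le k-1$ and every set $I=\{1\}\cup J$ with $J\subseteq\{2,\dots,k\}$, $|J|=t$, \[\hat P_I=-\frac{1}{2^{k-2}}\sum_{i=0}^{\tau}\sum_{j=0}^{\tau-i}(-1)^j\binom{k-t-1}{i}\binom{t}{j}.\]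
   Context: For $P:\{-1,1\}^k\to\{-1,1\}$ and $I\subseteq[k]$, the Fourier coefficient is $\hat P_I=\mathbb{E}_{x\in\{-1,1\}^k}[P(x)\prod_{i\in I}x_i]$ with $x$ uniform. Index $1$ is called the president and indices $2,\dots,k$ the citizens. *)

theory Defs
  imports Complex_Main "HOL-Library.FuncSet"
begin

text \<open>The Boolean cube \<open>{-1,1}^k\<close>, with coordinates indexed by \<open>{1..k}\<close>
  (index 1 is the president, indices 2..k the citizens).\<close>
definition cube :: "nat \<Rightarrow> (nat \<Rightarrow> int) set" where
  "cube k = PiE {1..k} (\<lambda>_. {-1, 1})"

definition fourier_coeff :: "nat \<Rightarrow> ((nat \<Rightarrow> int) \<Rightarrow> int) \<Rightarrow> nat set \<Rightarrow> real" where
  "fourier_coeff k P I =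
     (\<Sum>x\<in>cube k. real_of_int (P x * (\<Prod>i\<in>I. x i))) / 2 ^ k"

definition wmaj :: "nat \<Rightarrow> nat \<Rightarrow> (nat \<Rightarrow> int) \<Rightarrow> int" where
  "wmaj k a x = sgn (int a * x 1 + (\<Sum>i\<in>{2..k}. x i))"

end

theory Submission imports Defs begin

lemma pow_insert_sum:
  fixes f :: "'a set \<Rightarrow> 'b::comm_monoid_add"
  assumes "finite A" "x \<notin> A"
  shows "(\<Sum>S\<in>Pow (insert x A). f S) = (\<Sum>S\<in>Pow A. f S + f (insert x S))"
proof -
  have d: "Pow A \<inter> insert x ` Pow A = {}" using assms(2) by auto
  have inj: "inj_on (insert x) (Pow A)" by (rule inj_onI) (metis Diff_insert_absorb PowD subsetD assms(2))
  have "(\<Sum>S\<in>Pow (insert x A). f S) = (\<Sum>S\<in>Pow A. f S) + (\<Sum>S\<in>insert x ` Pow A. f S)"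
    unfolding Pow_insert using assms(1) d by (intro sum.union_disjoint) auto
  also have "(\<Sum>S\<in>insert x ` Pow A. f S) = (\<Sum>S\<in>Pow A. f (insert x S))"
    using sum.reindex[OF inj] by simp
  finally show ?thesis by (simp add: sum.distrib)
qed

lemma neg_pow_diff:
  assumes "m \<le> t" shows "(-1::int)^(t-m) = (-1)^t * (-1)^m"
proof -
  obtain d where t: "t = m + d" using assms le_Suc_ex by blast
  have "(-1::int)^m * (-1)^m = 1" by (simp flip: power_add)
  then show ?thesis unfolding t by (simp add: power_add algebra_simps)
qed

lemma compl_sum:
  fixes g :: "nat \<Rightarrow> int"
  assumes "finite C" "J \<subseteq> C"
  shows "(\<Sum>T\<in>Pow C. (-1)^card(T\<inter>J) * g (card T))
       = (-1)^card J * (\<Sum>T\<in>Pow C. (-1)^card(T\<inter>J) * g (card C - card T))"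
proof -
  have bij: "bij_betw (\<lambda>T. C - T) (Pow C) (Pow C)"
    by (rule bij_betw_byWitness[where f'="\<lambda>T. C - T"]) auto
  have "(\<Sum>T\<in>Pow C. (-1)^card(T\<inter>J) * g (card T))
      = (\<Sum>T\<in>Pow C. (-1)^card((C-T)\<inter>J) * g (card (C-T)))"
    using sum.reindex_bij_betw[OF bij, of "\<lambda>T. (-1)^card(T\<inter>J) * g (card T)"] by simp
  also have "\<dots> = (\<Sum>T\<in>Pow C. (-1)^card J * ((-1)^card(T\<inter>J) * g (card C - card T)))"
  proof (rule sum.cong[OF refl])
    fix T assume T: "T \<in> Pow C"
    have fT: "finite T" using T assms(1) finite_subset by auto
    have "(C-T)\<inter>J = J - (T \<inter> J)" using assms(2) by auto
    have fJ: "finite J" using assms finite_subset by auto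
    have c1: "card ((C-T)\<inter>J) = card J - card (T\<inter>J)"
      unfolding \<open>(C-T)\<inter>J = J - (T \<inter> J)\<close> using fJ by (subst card_Diff_subset) auto
    have le: "card (T\<inter>J) \<le> card J" using fJ by (intro card_mono) auto
    have c2: "card (C-T) = card C - card T" using T fT by (simp add: card_Diff_subset)
    show "(-1)^card((C-T)\<inter>J) * g (card (C-T)) = (-1)^card J * ((-1)^card(T\<inter>J) * g (card C - card T))"
      unfolding c1 c2 neg_pow_diff[OF le] by simp
  qed
  finally show ?thesis by (simp add: sum_distrib_left)
qed

lemma card_split:
  assumes "finite C" "J \<subseteq> C"
  shows "card {T\<in>Pow C. card (T-J) = i \<and> card (T\<inter>J) = j} = (card C - card J choose i) * (card J choose j)"
proof -
  let ?X = "{B. B \<subseteq> C - J \<and> card B = i}" and ?Y = "{A. A \<subseteq> J \<and> card A = j}"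
  have eq: "{T\<in>Pow C. card (T-J) = i \<and> card (T\<inter>J) = j} = (\<lambda>(B,A). B \<union> A) ` (?X \<times> ?Y)"
  proof (intro equalityI subsetI)
    fix T assume "T \<in> {T\<in>Pow C. card (T-J) = i \<and> card (T\<inter>J) = j}"
    then have "(T-J, T\<inter>J) \<in> ?X \<times> ?Y" and "T = (T-J) \<union> (T\<inter>J)" by auto
    then show "T \<in> (\<lambda>(B,A). B \<union> A) ` (?X \<times> ?Y)" by (metis (no_types, lifting) case_prod_conv image_eqI)
  next
    fix T assume "T \<in> (\<lambda>(B,A). B \<union> A) ` (?X \<times> ?Y)"
    then obtain B A where "B \<in> ?X" "A \<in> ?Y" "T = B \<union> A" by auto
    moreover have "(B \<union> A) - J = B" "(B \<union> A) \<inter> J = A" using calculation by auto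
    ultimately show "T \<in> {T\<in>Pow C. card (T-J) = i \<and> card (T\<inter>J) = j}" using assms by auto
  qed
  have inj: "inj_on (\<lambda>(B,A). B \<union> A) (?X \<times> ?Y)"
  proof (rule inj_onI, clarify)
    fix B A B' A' assume "B \<subseteq> C - J" "A \<subseteq> J" "B' \<subseteq> C - J" "A' \<subseteq> J" "B \<union> A = B' \<union> A'"
    then show "B = B' \<and> A = A'" by blast
  qed
  have "card ?X = card C - card J choose i"
    using n_subsets[of "C - J" i] assms by (simp add: card_Diff_subset finite_subset)
  moreover have "card ?Y = card J choose j"
    using n_subsets[of J j] assms finite_subset by auto
  ultimately show ?thesis unfolding eq card_image[OF inj] card_cartesian_product by simp
qed


lemma H_formula:
  assumes "finite C" "J \<subseteq> C"
  shows "(\<Sum>T\<in>Pow C. (-1::int)^card(T\<inter>J) * (if card T \<le> \<tau> then 1 else 0))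
    = (\<Sum>i=0..\<tau>. \<Sum>j=0..\<tau>-i. (-1)^j * int (card C - card J choose i) * int (card J choose j))"
proof -
  let ?S = "{T\<in>Pow C. card T \<le> \<tau>}"
  let ?g = "\<lambda>T. (card (T-J), card (T\<inter>J))"
  let ?P = "Sigma {0..\<tau>} (\<lambda>i. {0..\<tau>-i})"
  have fC: "finite (Pow C)" using assms by simp
  have cardT: "card T = card (T-J) + card (T\<inter>J)" if "T \<in> Pow C" for T
  proof -
    have "finite T" using that assms(1) finite_subset by auto
    then show ?thesis using card_Int_Diff[of T J] by (simp add: add.commute)
  qed
  have "(\<Sum>T\<in>Pow C. (-1::int)^card(T\<inter>J) * (if card T \<le> \<tau> then 1 else 0))
      = (\<Sum>T\<in>?S. (-1::int)^card(T\<inter>J))"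
    using sum.inter_filter[OF fC, of "\<lambda>T. (-1::int)^card(T\<inter>J)" "\<lambda>T. card T \<le> \<tau>"]
    by (simp add: if_distrib cong: if_cong)
  also have "\<dots> = (\<Sum>p\<in>?P. \<Sum>T\<in>{T. T \<in> ?S \<and> ?g T = p}. (-1::int)^card(T\<inter>J))"
  proof (rule sum.group[symmetric])
    show "finite ?S" using fC by simp
    show "finite ?P" by simp
    show "?g ` ?S \<subseteq> ?P" using cardT by auto
  qed
  also have "\<dots> = (\<Sum>p\<in>?P. (-1)^snd p * int (card C - card J choose fst p) * int (card J choose snd p))"
  proof (rule sum.cong[OF refl])
    fix p assume p: "p \<in> ?P"
    obtain i j where pij: "p = (i,j)" by fastforce
    have ij: "i + j \<le> \<tau>" using p pij by auto
    have seteq: "{T. T \<in> ?S \<and> ?g T = p} = {T\<in>Pow C. card (T-J) = i \<and> card (T\<inter>J) = j}"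
      using cardT ij pij by auto
    have "(\<Sum>T\<in>{T. T \<in> ?S \<and> ?g T = p}. (-1::int)^card(T\<inter>J))
        = (\<Sum>T\<in>{T\<in>Pow C. card (T-J) = i \<and> card (T\<inter>J) = j}. (-1::int)^j)"
      unfolding seteq by (rule sum.cong) auto
    also have "\<dots> = (-1)^j * int (card C - card J choose i) * int (card J choose j)"
      using card_split[OF assms, of i j] by (simp add: algebra_simps)
    finally show "(\<Sum>T\<in>{T. T \<in> ?S \<and> ?g T = p}. (-1::int)^card(T\<inter>J))
        = (-1)^snd p * int (card C - card J choose fst p) * int (card J choose snd p)"
      using pij by simp
  qed
  also have "\<dots> = (\<Sum>i=0..\<tau>. \<Sum>j=0..\<tau>-i. (-1)^j * int (card C - card J choose i) * int (card J choose j))"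
    by (simp add: sum.Sigma split_def)
  finally show ?thesis .
qed

definition Phi :: "nat \<Rightarrow> nat set \<Rightarrow> nat \<Rightarrow> int" where
  "Phi k S = restrict (\<lambda>i. if i \<in> S then -1 else 1) {1..k}"

lemma cube_sum:
  fixes F :: "(nat \<Rightarrow> int) \<Rightarrow> 'b::comm_monoid_add"
  shows "(\<Sum>x\<in>cube k. F x) = (\<Sum>S\<in>Pow {1..k}. F (Phi k S))"
proof -
  have bij: "bij_betw (Phi k) (Pow {1..k}) (cube k)"
  proof (rule bij_betw_byWitness[where f'="\<lambda>x. {i\<in>{1..k}. x i = -1}"])
    show "\<forall>S\<in>Pow {1..k}. {i \<in> {1..k}. Phi k S i = - 1} = S" by (auto simp: Phi_def)
    show "\<forall>x\<in>cube k. Phi k {i \<in> {1..k}. x i = - 1} = x"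
    proof
      fix x assume x: "x \<in> cube k"
      show "Phi k {i \<in> {1..k}. x i = - 1} = x"
      proof (rule ext)
        fix i show "Phi k {i \<in> {1..k}. x i = - 1} i = x i"
          using x by (cases "i \<in> {1..k}") (auto simp: Phi_def cube_def PiE_def extensional_def)
      qed
    qed
    show "Phi k ` Pow {1..k} \<subseteq> cube k" by (auto simp: Phi_def cube_def restrict_PiE_iff)
    show "(\<lambda>x. {i \<in> {1..k}. x i = - 1}) ` cube k \<subseteq> Pow {1..k}" by auto
  qed
  show ?thesis using sum.reindex_bij_betw[OF bij, of F] by simp
qed

lemma prod_Phi:
  assumes "I \<subseteq> {1..k}"
  shows "(\<Prod>i\<in>I. Phi k S i) = (-1)^card (S \<inter> I)"
proof -
  have fI: "finite I" using assms finite_subset by auto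
  have "(\<Prod>i\<in>I. Phi k S i) = (\<Prod>i\<in>I. if i \<in> S then -1 else 1)"
    using assms by (intro prod.cong) (auto simp: Phi_def)
  also have "\<dots> = (-1)^card (I \<inter> {i. i \<in> S})"
    using fI by (simp add: prod.If_cases)
  finally show ?thesis by (simp add: Int_commute Collect_mem_eq)
qed

lemma sum_Phi:
  assumes "C \<subseteq> {1..k}"
  shows "(\<Sum>i\<in>C. Phi k S i) = int (card C) - 2 * int (card (S \<inter> C))"
proof -
  have fC: "finite C" using assms finite_subset by auto
  have "(\<Sum>i\<in>C. Phi k S i) = (\<Sum>i\<in>C. if i \<in> S then -1 else 1)"
    using assms by (intro sum.cong) (auto simp: Phi_def)
  also have "\<dots> = - int (card (C \<inter> {i. i \<in> S})) + int (card (C \<inter> - {i. i \<in> S}))"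
    using fC by (simp add: sum.If_cases)
  also have "card (C \<inter> - {i. i \<in> S}) = card C - card (S \<inter> C)"
    using fC by (metis Collect_mem_eq Diff_eq card_Diff_subset_Int finite_Int inf_commute)
  also have "card (S \<inter> C) \<le> card C" using fC by (intro card_mono) auto
  ultimately show ?thesis by (simp add: Int_commute Collect_mem_eq)
qed

lemma sgnA:
  fixes n a c \<tau> :: nat
  assumes "n - a = 2*\<tau>+1" "a < n" "c \<le> n"
  shows "sgn (int a + (int n - 2*int c)) = (if n - \<tau> \<le> c then -1 else 1)"
proof -
  have h: "int n = int a + 2*int \<tau> + 1" using assms by linarith
  have e: "int a + (int n - 2*int c) = 2*(int a + int \<tau> - int c) + 1" using h by simp
  have nz: "\<And>z::int. 2*z+1 \<noteq> 0" by presburger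
  show ?thesis unfolding e sgn_if using nz[of "int a + int \<tau> - int c"] h assms(3) by auto
qed

lemma sgnB:
  fixes n a c \<tau> :: nat
  assumes "n - a = 2*\<tau>+1" "a < n" "c \<le> n"
  shows "sgn (- int a + (int n - 2*int c)) = (if c \<le> \<tau> then 1 else -1)"
proof -
  have h: "int n = int a + 2*int \<tau> + 1" using assms by linarith
  have e: "- int a + (int n - 2*int c) = 2*(int \<tau> - int c) + 1" using h by simp
  have nz: "\<And>z::int. 2*z+1 \<noteq> 0" by presburger
  show ?thesis unfolding e sgn_if using nz[of "int \<tau> - int c"] h assms(3) by auto
qed


lemma chi_zero:
  assumes "finite C" "J \<subseteq> C" "J \<noteq> {}"
  shows "(\<Sum>T\<in>Pow C. (-1::int)^card(T\<inter>J)) = 0"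
proof -
  obtain j where j: "j \<in> J" using assms(3) by auto
  let ?C' = "C - {j}"
  have Ceq: "C = insert j ?C'" using j assms(2) by auto
  have "(\<Sum>T\<in>Pow C. (-1::int)^card(T\<inter>J)) = (\<Sum>T\<in>Pow ?C'. (-1::int)^card(T\<inter>J) + (-1)^card(insert j T\<inter>J))"
    by (subst Ceq, rule pow_insert_sum) (use assms(1) in auto)
  also have "\<dots> = (\<Sum>T\<in>Pow ?C'. 0)"
  proof (rule sum.cong[OF refl])
    fix T assume T: "T \<in> Pow ?C'"
    have fT: "finite (T \<inter> J)" using finite_subset[of T "C - {j}"] T assms(1) by auto
    have "insert j T \<inter> J = insert j (T \<inter> J)" using j by auto
    moreover have "j \<notin> T \<inter> J" using T by auto
    ultimately have "card (insert j T \<inter> J) = Suc (card (T\<inter>J))" using fT by simp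
    then show "(-1::int)^card(T\<inter>J) + (-1)^card(insert j T\<inter>J) = 0" by simp
  qed
  finally show ?thesis by simp
qed

lemma core:
  fixes k a :: nat and J :: "nat set" and e :: bool
  assumes k2: "k \<ge> 2" and ak: "a \<le> k - 2" and odd: "odd (a + k - 1)" and J: "J \<subseteq> {2..k}"
    and sgncond: "(-1::int)^card J * (if e then -1 else 1) = -1"
  shows "(\<Sum>x\<in>cube k. wmaj k a x * (\<Prod>i\<in>(if e then insert 1 J else J). x i))
    = 2 * ((\<Sum>T\<in>Pow {2..k}. (-1)^card(T\<inter>J))
       - 2 * (-1)^card J * (\<Sum>T\<in>Pow {2..k}. (-1)^card(T\<inter>J) * (if card T \<le> (k - a - 1) div 2 then 1 else 0)))"
proof -
  define C where "C = {2..k}"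
  define n where "n = k - 1"
  define \<tau> where "\<tau> = (k - a - 1) div 2"
  define t where "t = card J"
  define s :: int where "s = (if e then -1 else 1)"
  define I where "I = (if e then insert 1 J else J)"
  define \<chi> :: "nat set \<Rightarrow> int" where "\<chi> T = (-1)^card(T\<inter>J)" for T
  define A :: "nat \<Rightarrow> int" where "A c = (if n - \<tau> \<le> c then -1 else 1)" for c
  define B :: "nat \<Rightarrow> int" where "B c = (if c \<le> \<tau> then 1 else -1)" for c
  have fC: "finite C" and cardC: "card C = n" unfolding C_def n_def by auto
  have JC: "J \<subseteq> C" using J C_def by simp
  have na: "n - a = 2*\<tau>+1" "a < n"
    using k2 ak odd unfolding n_def \<tau>_def by (auto elim!: oddE)
  have st: "s * (-1)^t = -1" using sgncond unfolding s_def t_def by (simp add: mult.commute)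
  have I1: "I \<subseteq> {1..k}" using J k2 unfolding I_def by auto
  have one: "{1..k} = insert 1 C" "1 \<notin> C" using k2 unfolding C_def by auto
  have Ck: "C \<subseteq> {1..k}" unfolding C_def by auto
  have F: "wmaj k a (Phi k T) * (\<Prod>i\<in>I. Phi k T i) = \<chi> T * A (card T)
     \<and> wmaj k a (Phi k (insert 1 T)) * (\<Prod>i\<in>I. Phi k (insert 1 T) i) = s * (\<chi> T * B (card T))"
    if T: "T \<subseteq> C" for T
  proof -
    have fT: "finite T" using T fC finite_subset by auto
    have cT: "card T \<le> n" using T fC cardC card_mono by fastforce
    have p1: "Phi k T 1 = 1" "Phi k (insert 1 T) 1 = -1" using T one k2 by (auto simp: Phi_def)
    have sc: "(\<Sum>i\<in>{2..k}. Phi k S i) = int n - 2 * int (card T)" if "S \<inter> C = T" for S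
      using sum_Phi[OF Ck, of S] that cardC C_def by (simp add: Int_commute)
    have w1: "wmaj k a (Phi k T) = A (card T)"
      unfolding wmaj_def p1 sc[of T, OF Int_absorb2[OF T]] A_def
      using sgnA[OF na cT] by simp
    have "insert 1 T \<inter> C = T" using T one by auto
    then have w2: "wmaj k a (Phi k (insert 1 T)) = B (card T)"
      unfolding wmaj_def p1 B_def using sc[of "insert 1 T"] sgnB[OF na cT] by simp
    have q1: "(\<Prod>i\<in>I. Phi k T i) = \<chi> T"
      unfolding prod_Phi[OF I1] \<chi>_def using T one by (auto simp: I_def intro!: arg_cong[where f="\<lambda>x. (-1::int)^card x"])
    have fTJ: "finite (T \<inter> J)" using fT by simp
    have "1 \<notin> T \<inter> J" using T one by auto
    then have h1: "1 \<notin> T \<inter> J" .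
    have "(\<Prod>i\<in>I. Phi k (insert 1 T) i) = (-1)^card(insert 1 T \<inter> I)" by (rule prod_Phi[OF I1])
    also have "insert 1 T \<inter> I = (if e then insert 1 (T\<inter>J) else T\<inter>J)"
      using T one JC unfolding I_def by auto
    also have "(-1::int)^card(if e then insert 1 (T\<inter>J) else T\<inter>J) = s * \<chi> T"
      using fTJ h1 by (cases e) (auto simp: s_def \<chi>_def)
    finally have q2: "(\<Prod>i\<in>I. Phi k (insert 1 T) i) = s * \<chi> T" .
    show ?thesis using w1 w2 q1 q2 by (simp add: algebra_simps)
  qed
  have "(\<Sum>x\<in>cube k. wmaj k a x * (\<Prod>i\<in>I. x i))
      = (\<Sum>S\<in>Pow (insert 1 C). wmaj k a (Phi k S) * (\<Prod>i\<in>I. Phi k S i))"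
    unfolding cube_sum one(1) ..
  also have "\<dots> = (\<Sum>T\<in>Pow C. \<chi> T * A (card T) + s * (\<chi> T * B (card T)))"
    by (subst pow_insert_sum[OF fC one(2)]) (use F in \<open>auto intro!: sum.cong\<close>)
  also have "\<dots> = (\<Sum>T\<in>Pow C. \<chi> T * A (card T)) + s * (\<Sum>T\<in>Pow C. \<chi> T * B (card T))"
    by (simp add: sum.distrib sum_distrib_left)
  also have "(\<Sum>T\<in>Pow C. \<chi> T * B (card T)) = (-1)^t * (\<Sum>T\<in>Pow C. \<chi> T * B (card C - card T))"
    unfolding \<chi>_def t_def by (rule compl_sum[OF fC JC])
  also have "(\<Sum>T\<in>Pow C. \<chi> T * B (card C - card T)) = - (\<Sum>T\<in>Pow C. \<chi> T * A (card T))"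
  proof -
    have "(\<Sum>T\<in>Pow C. \<chi> T * B (card C - card T)) = (\<Sum>T\<in>Pow C. - (\<chi> T * A (card T)))"
    proof (rule sum.cong[OF refl])
      fix T assume "T \<in> Pow C"
      then have "card T \<le> n" using fC cardC card_mono by fastforce
      then show "\<chi> T * B (card C - card T) = - (\<chi> T * A (card T))"
        unfolding A_def B_def cardC by auto
    qed
    then show ?thesis by (simp add: sum_negf)
  qed
  finally have eq0: "(\<Sum>x\<in>cube k. wmaj k a x * (\<Prod>i\<in>I. x i)) = (\<Sum>T\<in>Pow C. \<chi> T * A (card T)) + s * ((-1)^t * (- (\<Sum>T\<in>Pow C. \<chi> T * A (card T))))" .
  have "s * ((-1)^t * (- (\<Sum>T\<in>Pow C. \<chi> T * A (card T)))) = - (s * (-1)^t) * (\<Sum>T\<in>Pow C. \<chi> T * A (card T))"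
    by (simp add: algebra_simps)
  with eq0 st have step1: "(\<Sum>x\<in>cube k. wmaj k a x * (\<Prod>i\<in>I. x i)) = 2 * (\<Sum>T\<in>Pow C. \<chi> T * A (card T))"
    by simp
  have "(\<Sum>T\<in>Pow C. \<chi> T * A (card T)) = (\<Sum>T\<in>Pow C. \<chi> T - 2 * (\<chi> T * (if n - \<tau> \<le> card T then 1 else 0)))"
    by (rule sum.cong) (auto simp: A_def)
  also have "\<dots> = (\<Sum>T\<in>Pow C. \<chi> T) - 2 * (\<Sum>T\<in>Pow C. \<chi> T * (if n - \<tau> \<le> card T then 1 else 0))"
    by (simp add: sum_subtractf sum_distrib_left)
  also have "(\<Sum>T\<in>Pow C. \<chi> T * (if n - \<tau> \<le> card T then 1 else 0))
      = (-1)^t * (\<Sum>T\<in>Pow C. \<chi> T * (if n - \<tau> \<le> card C - card T then 1 else 0))"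
    unfolding \<chi>_def t_def by (rule compl_sum[OF fC JC])
  also have "(\<Sum>T\<in>Pow C. \<chi> T * (if n - \<tau> \<le> card C - card T then 1 else 0))
      = (\<Sum>T\<in>Pow C. \<chi> T * (if card T \<le> \<tau> then 1 else 0))"
  proof (rule sum.cong[OF refl])
    fix T assume "T \<in> Pow C"
    then have "card T \<le> n" using fC cardC card_mono by fastforce
    moreover have "\<tau> \<le> n" using na by linarith
    ultimately show "\<chi> T * (if n - \<tau> \<le> card C - card T then 1 else 0) = \<chi> T * (if card T \<le> \<tau> then 1 else 0)"
      unfolding cardC by auto
  qed
  finally show ?thesis using step1 unfolding I_def C_def \<chi>_def t_def \<tau>_def by simp
qed


lemma fc_eq: "fourier_coeff k P I = real_of_int (\<Sum>x\<in>cube k. P x * (\<Prod>i\<in>I. x i)) / 2 ^ k"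
  unfolding fourier_coeff_def by simp

lemma sum0choose: "(\<Sum>j=0..m. (-1::int)^j * x * int (0 choose j)) = x"
  by (induction m) auto

lemma H_real:
  assumes "J \<subseteq> {2..k}"
  shows "real_of_int (\<Sum>T\<in>Pow {2..k}. (-1)^card(T\<inter>J) * (if card T \<le> \<tau> then 1 else 0))
    = (\<Sum>i=0..\<tau>. \<Sum>j=0..\<tau> - i. (-1) ^ j * real (k - card J - 1 choose i) * real (card J choose j))"
proof -
  have e: "card {2..k} - card J = k - card J - 1" by simp
  show ?thesis unfolding H_formula[OF finite_atLeastAtMost assms] e by simp
qed

theorem lemma2p1:
  fixes k a :: nat
  assumes "k \<ge> 2" and "a \<le> k - 2" and "odd (a + k - 1)"
  defines "\<tau> \<equiv> (k - a - 1) div 2"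
  shows "(fourier_coeff k (wmaj k a) {1} =
           1 - (\<Sum>l=0..\<tau>. real (k - 1 choose l)) / 2 ^ (k - 2)) \<and>
         (\<forall>t I. odd t \<and> 1 \<le> t \<and> t \<le> k - 1 \<and> I \<subseteq> {2..k} \<and> card I = t \<longrightarrow>
           fourier_coeff k (wmaj k a) I =
             (\<Sum>i=0..\<tau>. \<Sum>j=0..\<tau> - i.
                (-1) ^ j * real (k - t - 1 choose i) * real (t choose j)) / 2 ^ (k - 2)) \<and>
         (\<forall>t J. even t \<and> 2 \<le> t \<and> t \<le> k - 1 \<and> J \<subseteq> {2..k} \<and> card J = t \<longrightarrow>
           fourier_coeff k (wmaj k a) ({1} \<union> J) =
             - (\<Sum>i=0..\<tau>. \<Sum>j=0..\<tau> - i.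
                (-1) ^ j * real (k - t - 1 choose i) * real (t choose j)) / 2 ^ (k - 2))"
proof -
  obtain m where km: "k = m + 2" using assms(1) le_Suc_ex by (metis add.commute)
  have p: "(2::real) ^ k = 4 * 2 ^ (k - 2)" "(2::real)^(k-1) = 2 * 2^(k-2)" unfolding km by simp_all
  define Hs :: "nat set \<Rightarrow> int" where
    "Hs J = (\<Sum>T\<in>Pow {2..k}. (-1)^card(T\<inter>J) * (if card T \<le> \<tau> then 1 else 0))" for J
  note core' = core[OF assms(1,2,3), folded \<tau>_def Hs_def]
  have part1: "fourier_coeff k (wmaj k a) {1} = 1 - (\<Sum>l=0..\<tau>. real (k - 1 choose l)) / 2 ^ (k - 2)"
  proof -
    have c: "(\<Sum>x\<in>cube k. wmaj k a x * (\<Prod>i\<in>{1}. x i)) = 2 * (2^(k-1) - 2 * Hs {})"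
      using core'[of "{}" True] by (simp add: card_Pow Hs_def)
    have h: "real_of_int (Hs {}) = (\<Sum>l=0..\<tau>. real (k - 1 choose l))"
    proof -
      have "Hs {} = (\<Sum>i=0..\<tau>. \<Sum>j=0..\<tau>-i. (-1)^j * int (card {2..k} - card ({}::nat set) choose i) * int (card ({}::nat set) choose j))"
        unfolding Hs_def by (rule H_formula) auto
      also have "\<dots> = (\<Sum>i=0..\<tau>. int (k - 1 choose i))"
        by (simp only: sum0choose card.empty) simp
      finally show ?thesis by simp
    qed
    show ?thesis unfolding fc_eq c using h p by (simp add: field_simps)
  qed
  have part2: "fourier_coeff k (wmaj k a) I =
             (\<Sum>i=0..\<tau>. \<Sum>j=0..\<tau> - i.
                (-1) ^ j * real (k - t - 1 choose i) * real (t choose j)) / 2 ^ (k - 2)"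
    if "odd t" "1 \<le> t" "t \<le> k - 1" "I \<subseteq> {2..k}" "card I = t" for t I
  proof -
    have ne: "I \<noteq> {}" using that by auto
    have c: "(\<Sum>x\<in>cube k. wmaj k a x * (\<Prod>i\<in>I. x i)) = 4 * Hs I"
      using core'[of I False] that chi_zero[OF finite_atLeastAtMost that(4) ne] by (simp add: Hs_def)
    show ?thesis unfolding fc_eq c using H_real[OF that(4), of \<tau>] p that(5)
      by (simp add: Hs_def field_simps)
  qed
  have part3: "fourier_coeff k (wmaj k a) ({1} \<union> J) =
             - (\<Sum>i=0..\<tau>. \<Sum>j=0..\<tau> - i.
                (-1) ^ j * real (k - t - 1 choose i) * real (t choose j)) / 2 ^ (k - 2)"
    if "even t" "2 \<le> t" "t \<le> k - 1" "J \<subseteq> {2..k}" "card J = t" for t J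
  proof -
    have ne: "J \<noteq> {}" using that by auto
    have c: "(\<Sum>x\<in>cube k. wmaj k a x * (\<Prod>i\<in>{1} \<union> J. x i)) = - 4 * Hs J"
      using core'[of J True] that chi_zero[OF finite_atLeastAtMost that(4) ne] by (simp add: Hs_def)
    show ?thesis unfolding fc_eq c using H_real[OF that(4), of \<tau>] p that(5)
      by (simp add: Hs_def field_simps)
  qed
  show ?thesis using part1 part2 part3 by blast
qed

end
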